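(* Assume the standing hypotheses, let $\sigma\in(0,1)$ and $C_1>0$. Then there exist $\rho>0$, $\bar\mu\in(0,\hat\mu]$ and $C>0$ such that for all $\mu\in(0,\bar\mu]$ and all $(x,\lambda)\in\mathcal B((x^*,\lambda^* ),\delta)$ with $x>0,\lambda>0$, $\|(x,\lambda)-(x^\mu,\lambda^\mu)\|<\rho$ and $\|F_\mu(x,\lambda)\|\le C_1\mu$, the following is well defined and satisfies $$\|(\Delta x,\Delta\lambda)-(\Delta x^N,\Delta\lambda^N)\|\le C\mu^2,$$ where $(\Delta x^N,\Delta\lambda^N)$ is the Newton direction for $\mu^+=\sigma\mu$ and $(\Delta x,\Delta\lambda)$ is constructed as follows. For $i\in\mathcal A$, $\Delta x_i\in\{\Delta x_i^S,\Delta x_i^C\}$ (chosen arbitrarily per index). $\Delta x_{\mathcal I}=\Delta x_{\mathcal I}^{ls}$ is the solution of $$\big(H_{\mathcal I\mathcal I}+X_{\mathcal I\mathcal I}^{-1}\Lambda_{\mathcal I\mathcal I}\big)\Delta x^{ls}_{\mathcal I}=-\big(\nabla f(x)_{\mathcal I}+H_{\mathcal I\mathcal A}\Delta x_{\mathcal A}\big)+\mu^+X_{\mathcal I\mathcal I}^{-1}e .$$ For $i\in\mathcal I$, $\Delta\lambda_i\in\{\Delta\lambda_i^{ls},\Delta\lambda_i^C\}$ where $\Delta\lambda^{ls}_{\mathcal I}=-\lambda_{\mathcal I}+\mu^+X_{\mathcal I\mathcal I}^{-1}e-X_{\mathcal I\mathcal I}^{-1}\Lambda_{\mathcal I\mathcal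 I}\Delta x^{ls}_{\mathcal I}$. For $i\in\mathcal A$, $\Delta\lambda_i\in\{\Delta\lambda_i^{ls},\Delta\lambda_i^b\}$ where $$\Delta\lambda^b_{\mathcal A}=\nabla f(x)_{\mathcal A}-\lambda_{\mathcal A}+H_{\mathcal A\mathcal A}\Delta x_{\mathcal A}+H_{\mathcal A\mathcal I}\Delta x^{ls}_{\mathcal I},$$ $$\Delta\lambda^{ls}_{\mathcal A}=\big(I+X_{\mathcal A\mathcal A}^2\big)^{-1}\Big[\Delta\lambda^b_{\mathcal A}-X_{\mathcal A\mathcal A}\big(\Lambda_{\mathcal A\mathcal A}X_{\mathcal A\mathcal A}e-\mu^+e+\Lambda_{\mathcal A\mathcal A}\Delta x_{\mathcal A}\big)\Big]$$ (the least-squares solution of the overdetermined system $-\Delta\lambda_{\mathcal A}=-(\Delta\lambda^b_{\mathcal A})$, $X_{\mathcal A\mathcal A}\Delta\lambda_{\mathcal A}=-(\Lambda_{\mathcal A\mathcal A}X_{\mathcal A\mathcal A}e-\mu^+e+\Lambda_{\mathcal A\mathcal A}\Delta x_{\mathcal A})$).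
   Context: Problem: minimize $f(x)$ subject to $x\ge0$, $f:\mathbb R^n\to\mathbb R$ twice continuously differentiable with locally Lipschitz Hessian. Norms Euclidean; $e$ all-ones; $X=\mathrm{diag}(x)$, $\Lambda=\mathrm{diag}(\lambda)$; $H=\nabla^2 f(x)$; subscripts $\mathcal A,\mathcal I$ denote sub-vectors and sub-blocks (first subscript rows, second columns). $F_\mu(x,\lambda)=\begin{bmatrix}\nabla f(x)-\lambda\\ \Lambda Xe-\mu e\end{bmatrix}$, $F'(x,\lambda)=\begin{bmatrix}H&-I\\ \Lambda&X\end{bmatrix}$. The Newton direction for $\mu^+=\sigma\mu$ solves $F'(x,\lambda)(\Delta x^N,\Delta\lambda^N)=-F_{\mu^+}(x,\lambda)$. Partial approximations: $\Delta x_i^S=-\frac{x_i[\nabla f(x)]_i-\mu^+}{x_iH_{ii}+\lambda_i}$, $\Delta x_i^C=-x_i+\mu^+/\lambda_i$, $\Delta\lambda_i^C=-\lambda_i+\mu^+/x_i$. Standing hypotheses: $(x^*,\lambda^* )$ satisfies $\nabla f(x^* )=\lambda^*$, $x^*\ge0$, $\lambda^*\ge0$, $x_i^*\lambda_i^*=0$, $x^*+\lambda^*>0$, $[\nabla^2f(x^* )]_{\mathcal I\mathcal I}\succ0$, where $\mathcal A=\{i:x^*_i=0\}$, $\mathcal I=\{i:x_i^*>0\}$. $\delta>0$: $F'$ nonsingular on $\mathcal B((x^*,\lambda^* ),\delta)$ with $\|F'^{-1}\|\le M$; $\hat\mu>0$: for $\mu\in(0,\hat\mu]$ a Lipschitz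 barrier trajectory $(x^\mu,\lambda^\mu)\in\mathcal B((x^*,\lambda^* ),\delta)$ with $F_\mu(x^\mu,\lambda^\mu)=0$, $\|(x^\mu,\lambda^\mu)-(x^*,\lambda^* )\|\le C_4\mu$ exists. *)

theory Defs
  imports "HOL-Analysis.Analysis"
begin

text \<open>Pairs (x,lambda) live in (real^'n) \<times> (real^'n), whose library norm is the Euclidean
  norm sqrt(norm x^2 + norm lambda^2).  gx stands for the gradient vector at x,
  H for the Hessian matrix at x.\<close>

definition Fmu :: "(real^'n \<Rightarrow> real^'n) \<Rightarrow> real \<Rightarrow> real^'n \<Rightarrow> real^'n \<Rightarrow> (real^'n) \<times> (real^'n)" where
  "Fmu g mu x l = (g x - l, \<chi> i. l$i * x$i - mu)"

definition Fprime :: "real^'n^'n \<Rightarrow> real^'n \<Rightarrow> real^'n \<Rightarrow> (real^'n) \<times> (real^'n) \<Rightarrow> (real^'n) \<times> (real^'n)" where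
  "Fprime H x l = (\<lambda>(dx, dl). (H *v dx - dl, \<chi> i. l$i * dx$i + x$i * dl$i))"

definition dxS :: "real^'n \<Rightarrow> real^'n^'n \<Rightarrow> real \<Rightarrow> real^'n \<Rightarrow> real^'n \<Rightarrow> 'n \<Rightarrow> real" where
  "dxS gx H mup x l i = - (x$i * gx$i - mup) / (x$i * H$i$i + l$i)"

definition dxC :: "real \<Rightarrow> real^'n \<Rightarrow> real^'n \<Rightarrow> 'n \<Rightarrow> real" where
  "dxC mup x l i = - x$i + mup / l$i"

definition dlC :: "real \<Rightarrow> real^'n \<Rightarrow> real^'n \<Rightarrow> 'n \<Rightarrow> real" where
  "dlC mup x l i = - l$i + mup / x$i"

definition dxAct :: "'n set \<Rightarrow> ('n \<Rightarrow> bool) \<Rightarrow> real^'n \<Rightarrow> real^'n^'n \<Rightarrow> real \<Rightarrow> real^'n \<Rightarrow> real^'n \<Rightarrow> real^'n" where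
  "dxAct A sS gx H mup x l =
     (\<chi> i. if i \<in> A then (if sS i then dxS gx H mup x l i else dxC mup x l i) else 0)"

definition ls_system :: "'n set \<Rightarrow> 'n set \<Rightarrow> real^'n^'n \<Rightarrow> real^'n \<Rightarrow> real \<Rightarrow> real^'n \<Rightarrow> real^'n \<Rightarrow> real^'n \<Rightarrow> real^'n \<Rightarrow> bool" where
  "ls_system I A H gx mup x l dxA y \<longleftrightarrow>
     (\<forall>j. j \<notin> I \<longrightarrow> y$j = 0) \<and>
     (\<forall>i\<in>I. (\<Sum>j\<in>I. (H$i$j + (if i = j then l$i / x$i else 0)) * y$j)
              = - (gx$i + (\<Sum>j\<in>A. H$i$j * dxA$j)) + mup / x$i)"

definition dlb :: "'n set \<Rightarrow> 'n set \<Rightarrow> real^'n^'n \<Rightarrow> real^'n \<Rightarrow> real^'n \<Rightarrow> real^'n \<Rightarrow> 'n \<Rightarrow> real" where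
  "dlb I A H gx l dx i = gx$i - l$i + (\<Sum>j\<in>A. H$i$j * dx$j) + (\<Sum>j\<in>I. H$i$j * dx$j)"

text \<open>Least-squares component on A: (I + X_AA^2)^-1 is diagonal, so componentwise.\<close>
definition dlsA :: "'n set \<Rightarrow> 'n set \<Rightarrow> real^'n^'n \<Rightarrow> real^'n \<Rightarrow> real \<Rightarrow> real^'n \<Rightarrow> real^'n \<Rightarrow> real^'n \<Rightarrow> 'n \<Rightarrow> real" where
  "dlsA I A H gx mup x l dx i =
     (dlb I A H gx l dx i - x$i * (l$i * x$i - mup + l$i * dx$i)) / (1 + (x$i)^2)"

definition dlsI :: "real \<Rightarrow> real^'n \<Rightarrow> real^'n \<Rightarrow> real^'n \<Rightarrow> 'n \<Rightarrow> real" where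
  "dlsI mup x l dx i = - l$i + mup / x$i - (l$i / x$i) * dx$i"

definition dlam :: "'n set \<Rightarrow> 'n set \<Rightarrow> ('n \<Rightarrow> bool) \<Rightarrow> real^'n^'n \<Rightarrow> real^'n \<Rightarrow> real \<Rightarrow> real^'n \<Rightarrow> real^'n \<Rightarrow> real^'n \<Rightarrow> real^'n" where
  "dlam I A sL H gx mup x l dx =
     (\<chi> i. if i \<in> I then (if sL i then dlsI mup x l dx i else dlC mup x l i)
           else if i \<in> A then (if sL i then dlsA I A H gx mup x l dx i else dlb I A H gx l dx i)
           else 0)"

end

theory Submission imports Defs begin

lemma Fprime_linear: fixes H :: "real^'n^'n" shows "linear (Fprime H x l)"
proof (rule linearI)
  fix u v :: "(real^'n) \<times> (real^'n)"
  show "Fprime H x l (u+v) = Fprime H x l u + Fprime H x l v"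
    by (cases u, cases v) (simp add: Fprime_def matrix_vector_right_distrib vec_eq_iff algebra_simps)
next
  fix r :: real and u :: "(real^'n) \<times> (real^'n)"
  have "H *v (r *\<^sub>R a) = r *\<^sub>R (H *v a)" for a :: "real^'n"
    using linear_cmul[OF bounded_linear.linear[OF matrix_vector_mul_bounded_linear]] by auto
  then show "Fprime H x l (r *\<^sub>R u) = r *\<^sub>R Fprime H x l u"
    by (cases u) (simp add: Fprime_def vec_eq_iff algebra_simps)
qed

lemma Fprime_lower:
  fixes H :: "real^'n^'n"
  assumes "bij (Fprime H x l)" "onorm (inv (Fprime H x l)) \<le> M"
  shows "norm v \<le> M * norm (Fprime H x l v)"
proof -
  let ?T = "Fprime H x l"
  have bl: "bounded_linear (inv ?T)"
    using inj_linear_imp_inv_bounded_linear[of ?T] Fprime_linear assms(1) bij_is_inj linear_linear by blast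
  have "v = inv ?T (?T v)" using assms(1) by (simp add: bij_is_inj)
  hence "norm v = norm (inv ?T (?T v))" by simp
  also have "\<dots> \<le> onorm (inv ?T) * norm (?T v)" by (rule onorm[OF bl])
  also have "\<dots> \<le> M * norm (?T v)" by (rule mult_right_mono[OF assms(2)]) simp
  finally show ?thesis .
qed

lemma sum_abs_bound:
  assumes "finite S" "\<And>j. j \<in> S \<Longrightarrow> \<bar>f j\<bar> \<le> B"
  shows "\<bar>sum f S\<bar> \<le> real (card S) * B"
proof -
  have "\<bar>sum f S\<bar> \<le> sum (\<lambda>j. \<bar>f j\<bar>) S" by (rule sum_abs)
  also have "\<dots> \<le> sum (\<lambda>j. B) S" by (rule sum_mono) (use assms in auto)
  finally show ?thesis by simp
qed

lemma sum_abs_bound_n: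
  fixes S :: "'n::finite set"
  assumes "\<And>j. j \<in> S \<Longrightarrow> \<bar>f j\<bar> \<le> B" and B: "0 \<le> B"
  shows "\<bar>sum f S\<bar> \<le> real CARD('n) * B"
proof -
  have "\<bar>sum f S\<bar> \<le> real (card S) * B" by (rule sum_abs_bound) (use assms in auto)
  also have "\<dots> \<le> real CARD('n) * B"
  proof (cases "S = {}")
    case False
    have "card S \<le> CARD('n)" by (rule card_mono) auto
    then show ?thesis using B by (intro mult_right_mono) auto
  qed (use B in simp)
  finally show ?thesis .
qed

lemma mv_bound:
  fixes H :: "real^'n^'n"
  assumes "\<And>i j. \<bar>H$i$j\<bar> \<le> h" "\<And>j. \<bar>v$j\<bar> \<le> V" "0 \<le> V"
  shows "\<bar>(H *v v)$i\<bar> \<le> real CARD('n) * (h * V)"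
  unfolding matrix_vector_mult_def vec_lambda_beta
proof (rule sum_abs_bound_n)
  have h: "0 \<le> h" using assms(1)[of i i] by linarith
  show "0 \<le> h * V" using h assms(3) by simp
  fix j show "\<bar>H$i$j * v$j\<bar> \<le> h * V" unfolding abs_mult
    using assms(1)[of i j] assms(2)[of j] h by (intro mult_mono) auto
qed


lemma l1_bound:
  fixes v :: "real^'n"
  assumes "\<And>k. \<bar>v$k\<bar> \<le> B" "0 \<le> B"
  shows "norm v \<le> real CARD('n) * B"
proof -
  have "norm v \<le> sum (\<lambda>i. \<bar>v$i\<bar>) UNIV" by (rule norm_le_l1_cart)
  also have "\<dots> \<le> \<bar>sum (\<lambda>i. \<bar>v$i\<bar>) UNIV\<bar>" by simp
  also have "\<dots> \<le> real CARD('n) * B" by (rule sum_abs_bound_n) (use assms in auto)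
  finally show ?thesis .
qed

definition Kf :: "nat \<Rightarrow> real \<Rightarrow> real \<Rightarrow> real \<Rightarrow> real \<Rightarrow> real \<Rightarrow> real \<Rightarrow> real" where
  "Kf n a h cA cI c lb = (let kA = (2*(real n+1)*h+1)*a^2/cA; kx = kA + real n^2*h*kA/c;
      kl = a*kx/cI + a^2/cI + real n*h*kx + a*lb*kx in real n*(kx+kl))"

locale core =
  fixes H :: "real^'n^'n" and x l g p q :: "real^'n" and A I :: "'n set"
    and mup \<mu> a h cA cI c lb :: real
  assumes part: "A \<inter> I = {}" "A \<union> I = UNIV"
  and xpos: "\<And>i. x$i > 0" and lpos: "\<And>i. l$i > 0"
  and mu: "0 < \<mu>" "\<mu> \<le> 1"
  and eq1: "\<And>i. (H *v p)$i - q$i = l$i - g$i"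
  and eq2: "\<And>i. l$i*p$i + x$i*q$i = mup - l$i*x$i"
  and xA: "\<And>i. i\<in>A \<Longrightarrow> x$i \<le> a*\<mu>" and lA: "\<And>i. i\<in>A \<Longrightarrow> cA \<le> l$i" and cA: "cA > 0"
  and xI: "\<And>i. i\<in>I \<Longrightarrow> cI \<le> x$i" and cI: "cI > 0" and lI: "\<And>i. i\<in>I \<Longrightarrow> l$i \<le> a*\<mu>"
  and lub: "\<And>i. l$i \<le> lb"
  and Hb: "\<And>i j. \<bar>H$i$j\<bar> \<le> h"
  and pb: "\<And>i. \<bar>p$i\<bar> \<le> a*\<mu>" and qb: "\<And>i. \<bar>q$i\<bar> \<le> a*\<mu>"
  and diag: "\<And>i. i\<in>A \<Longrightarrow> cA/2 \<le> x$i*H$i$i + l$i"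
  and coer: "\<And>v. (\<forall>j\<in>A. v$j = 0) \<Longrightarrow> c*(norm v)^2 \<le> (\<Sum>i\<in>I. \<Sum>j\<in>I. v$i * H$i$j * v$j)"
  and c: "c > 0"
  and a: "a \<ge> 0"
begin

lemma h0: "0 \<le> h" using Hb[of undefined undefined] by linarith

lemma dxA_err:
  assumes i: "i \<in> A"
  shows "\<bar>dxAct A sS g H mup x l $ i - p$i\<bar> \<le> (2*(real CARD('n)+1)*h+1)*a^2/cA * \<mu>^2"
proof -
  define N where "N = real CARD('n)"
  have xi: "0 < x$i" "x$i \<le> a*\<mu>" using xpos xA i by auto
  have li: "cA \<le> l$i" using lA i by auto
  have am: "0 \<le> a*\<mu>" using a mu by simp
  have Hp: "\<bar>(H *v p)$i\<bar> \<le> N*(h*(a*\<mu>))" unfolding N_def by (rule mv_bound[OF Hb pb am])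
  have Hii: "\<bar>H$i$i*p$i\<bar> \<le> h*(a*\<mu>)" unfolding abs_mult using Hb[of i i] pb[of i] h0 by (intro mult_mono) auto
  have base: "0 \<le> a^2/cA * \<mu>^2" using cA by simp
  show ?thesis
  proof (cases "sS i")
    case True
    define den where "den = x$i*H$i$i + l$i"
    have den: "cA/2 \<le> den" using diag[OF i] by (simp add: den_def)
    have den0: "den > 0" using den cA by linarith
    have e1: "x$i*((H *v p)$i - q$i) = x$i*(l$i - g$i)" using eq1[of i] by simp
    have comb: "x$i*(H *v p)$i + l$i*p$i = mup - x$i*g$i"
      using e1 eq2[of i] by (simp add: algebra_simps)
    have val: "dxAct A sS g H mup x l $ i = - (x$i * g$i - mup) / den"
      using i True by (simp add: dxAct_def dxS_def den_def)
    have key: "dxAct A sS g H mup x l $ i - p$i = x$i*((H *v p)$i - H$i$i*p$i) / den"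
      unfolding val using den0 comb by (simp add: field_simps den_def)
    have num: "\<bar>x$i*((H *v p)$i - H$i$i*p$i)\<bar> \<le> (a*\<mu>)*((N+1)*(h*(a*\<mu>)))"
      unfolding abs_mult using xi Hp Hii by (intro mult_mono) (auto simp: algebra_simps)
    have "\<bar>dxAct A sS g H mup x l $ i - p$i\<bar> = \<bar>x$i*((H *v p)$i - H$i$i*p$i)\<bar> / den"
      unfolding key using den0 by simp
    also have "\<dots> \<le> (a*\<mu>)*((N+1)*(h*(a*\<mu>))) / (cA/2)"
      using num den cA by (meson abs_ge_zero divide_mono half_gt_zero order_trans)
    also have "\<dots> = 2*(N+1)*h*a^2/cA*\<mu>^2" by (simp add: field_simps power2_eq_square)
    also have "\<dots> \<le> 2*(N+1)*h*a^2/cA*\<mu>^2 + a^2/cA*\<mu>^2" using base by linarith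
    also have "\<dots> = (2*(N+1)*h+1)*a^2/cA * \<mu>^2" using cA by (simp add: field_simps)
    finally show ?thesis unfolding N_def .
  next
    case False
    have val: "dxAct A sS g H mup x l $ i = - x$i + mup / l$i"
      using i False by (simp add: dxAct_def dxC_def)
    have l0: "l$i > 0" using lpos by auto
    have key: "dxAct A sS g H mup x l $ i - p$i = x$i*q$i / l$i"
      unfolding val using l0 eq2[of i] by (simp add: field_simps)
    have num: "\<bar>x$i*q$i\<bar> \<le> (a*\<mu>)*(a*\<mu>)"
      unfolding abs_mult using xi qb[of i] by (intro mult_mono) auto
    have "\<bar>dxAct A sS g H mup x l $ i - p$i\<bar> = \<bar>x$i*q$i\<bar> / l$i"
      unfolding key using l0 by simp
    also have "\<dots> \<le> (a*\<mu>)*(a*\<mu>) / cA"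
      using num li cA by (meson abs_ge_zero divide_mono order_trans)
    also have "\<dots> = a^2/cA*\<mu>^2" by (simp add: field_simps power2_eq_square)
    also have "\<dots> \<le> 2*(real CARD('n)+1)*h*a^2/cA*\<mu>^2 + a^2/cA*\<mu>^2"
      using h0 cA by simp
    also have "\<dots> = (2*(real CARD('n)+1)*h+1)*a^2/cA * \<mu>^2" using cA by (simp add: field_simps)
    finally show ?thesis .
  qed
qed


lemma quad_ge:
  assumes "\<forall>j\<in>A. v$j = 0"
  shows "c*(norm v)^2 \<le> (\<Sum>i\<in>I. v$i * (\<Sum>j\<in>I. (H$i$j + (if i = j then l$i/x$i else 0)) * v$j))"
proof -
  have eq: "v$i * (\<Sum>j\<in>I. (H$i$j + (if i = j then l$i/x$i else 0)) * v$j)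
      = (\<Sum>j\<in>I. v$i * H$i$j * v$j) + l$i/x$i*(v$i)^2" if "i \<in> I" for i
  proof -
    have "(\<Sum>j\<in>I. (H$i$j + (if i = j then l$i/x$i else 0)) * v$j)
        = (\<Sum>j\<in>I. H$i$j * v$j) + (\<Sum>j\<in>I. (if i = j then l$i/x$i * v$j else 0))"
    proof -
      have "(\<Sum>j\<in>I. (H$i$j + (if i = j then l$i/x$i else 0)) * v$j)
          = (\<Sum>j\<in>I. H$i$j * v$j + (if i = j then l$i/x$i * v$j else 0))"
        by (rule sum.cong) (auto simp: distrib_right)
      then show ?thesis by (simp add: sum.distrib)
    qed
    also have "(\<Sum>j\<in>I. (if i = j then l$i/x$i * v$j else 0)) = l$i/x$i * v$i"
      using that by simp
    finally show ?thesis by (simp add: sum_distrib_left algebra_simps power2_eq_square)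
  qed
  have "(\<Sum>i\<in>I. v$i * (\<Sum>j\<in>I. (H$i$j + (if i = j then l$i/x$i else 0)) * v$j))
      = (\<Sum>i\<in>I. \<Sum>j\<in>I. v$i * H$i$j * v$j) + (\<Sum>i\<in>I. l$i/x$i*(v$i)^2)"
    by (simp add: eq sum.distrib)
  moreover have "0 \<le> (\<Sum>i\<in>I. l$i/x$i*(v$i)^2)"
  proof (rule sum_nonneg)
    fix i have "0 \<le> l$i/x$i" using xpos[of i] lpos[of i] by simp
    then show "0 \<le> l$i/x$i*(v$i)^2" by (simp only: mult_nonneg_nonneg zero_le_power2)
  qed
  ultimately show ?thesis using coer[OF assms] by linarith
qed

definition Lmap :: "real^'n \<Rightarrow> real^'n" where
  "Lmap v = (\<chi> i. if i \<in> I then (\<Sum>j\<in>I. (H$i$j + (if i = j then l$i/x$i else 0)) * v$j) else v$i)"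

lemma Lmap_linear: "linear Lmap"
proof (rule linearI)
  fix u v show "Lmap (u + v) = Lmap u + Lmap v"
    unfolding Lmap_def vec_eq_iff by (simp add: distrib_left sum.distrib)
next
  fix r u show "Lmap (r *\<^sub>R u) = r *\<^sub>R Lmap u"
    unfolding Lmap_def vec_eq_iff by (simp add: sum_distrib_left algebra_simps)
qed

lemma Lmap_inj: "inj Lmap"
proof -
  have "v = 0" if L0: "Lmap v = 0" for v
  proof -
    have Li: "Lmap v $ i = 0" for i using L0 by simp
    have out: "v$i = 0" if "i \<notin> I" for i
      using Li[of i] that by (simp add: Lmap_def)
    have A0: "\<forall>j\<in>A. v$j = 0" using part(1) out by blast
    have "(\<Sum>j\<in>I. (H$i$j + (if i = j then l$i/x$i else 0)) * v$j) = 0" if "i \<in> I" for i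
      using Li[of i] that by (simp add: Lmap_def)
    then have "c*(norm v)^2 \<le> 0" using quad_ge[OF A0] by simp
    then show "v = 0" using c by (simp add: mult_le_0_iff)
  qed
  then show ?thesis using linear_injective_0[OF Lmap_linear] by blast
qed

lemma ls_exists_unique: "\<exists>!y. ls_system I A H g mup x l dxA y"
proof -
  define b where "b = (\<chi> i. if i \<in> I then - (g$i + (\<Sum>j\<in>A. H$i$j * dxA$j)) + mup / x$i else 0)"
  have "surj Lmap" using linear_injective_imp_surjective[OF Lmap_linear Lmap_inj refl] .
  then obtain y where y: "Lmap y = b" by (metis surjD)
  have yi: "Lmap y $ i = b $ i" for i using y by simp
  have ex: "ls_system I A H g mup x l dxA y"
    unfolding ls_system_def
  proof (intro conjI allI impI ballI)
    fix j assume "j \<notin> I" then show "y$j = 0"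
      using yi[of j] by (simp add: Lmap_def b_def)
  next
    fix i assume "i \<in> I" then show "(\<Sum>j\<in>I. (H$i$j + (if i = j then l$i / x$i else 0)) * y$j)
              = - (g$i + (\<Sum>j\<in>A. H$i$j * dxA$j)) + mup / x$i"
      using yi[of i] by (simp add: Lmap_def b_def)
  qed
  have "Lmap z = b" if z: "ls_system I A H g mup x l dxA z" for z
    unfolding vec_eq_iff
  proof
    fix i show "Lmap z $ i = b $ i"
      using z by (cases "i \<in> I") (simp_all add: ls_system_def Lmap_def b_def)
  qed
  then have "z = y" if "ls_system I A H g mup x l dxA z" for z
    using that y Lmap_inj by (metis injD)
  with ex show ?thesis by blast
qed

definition kA where "kA = (2*(real CARD('n)+1)*h+1)*a^2/cA"
definition kx where "kx = kA + real CARD('n)^2*h*kA/c"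

lemma kA0: "0 \<le> kA" unfolding kA_def using h0 cA by simp
lemma kx0: "0 \<le> kx" unfolding kx_def using kA0 h0 c by simp

lemma sum_AI: "sum f UNIV = sum f A + sum f I"
  using sum.union_disjoint[of A I f] part by simp

lemma newton_red:
  assumes i: "i \<in> I"
  shows "(\<Sum>j\<in>I. (H$i$j + (if i = j then l$i/x$i else 0)) * p$j)
         = - (g$i + (\<Sum>j\<in>A. H$i$j * p$j)) + mup / x$i"
proof -
  have xi: "x$i > 0" using xpos by simp
  have q: "q$i = (mup - l$i*x$i - l$i*p$i)/x$i" using eq2[of i] xi by (simp add: field_simps)
  have Hp: "(H *v p)$i = (\<Sum>j\<in>A. H$i$j * p$j) + (\<Sum>j\<in>I. H$i$j * p$j)"
    unfolding matrix_vector_mult_def vec_lambda_beta by (rule sum_AI)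
  have s: "(\<Sum>j\<in>I. (H$i$j + (if i = j then l$i/x$i else 0)) * p$j)
      = (\<Sum>j\<in>I. H$i$j * p$j + (if i = j then l$i/x$i * p$j else 0))"
    by (rule sum.cong) (auto simp: distrib_right)
  have "(\<Sum>j\<in>I. (H$i$j + (if i = j then l$i/x$i else 0)) * p$j) = (\<Sum>j\<in>I. H$i$j * p$j) + l$i/x$i*p$i"
    unfolding s using i by (simp add: sum.distrib)
  also have "\<dots> = - (g$i + (\<Sum>j\<in>A. H$i$j * p$j)) + mup / x$i"
    using eq1[of i] Hp q xi by (simp add: field_simps)
  finally show ?thesis .
qed

lemma dx_err:
  assumes y: "ls_system I A H g mup x l (dxAct A sS g H mup x l) y"
  shows "\<bar>(dxAct A sS g H mup x l + y)$k - p$k\<bar> \<le> kx*\<mu>^2"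
proof -
  define N where "N = real CARD('n)"
  define dA where "dA = dxAct A sS g H mup x l"
  have dAI: "dA$j = 0" if "j \<in> I" for j using that part(1) by (auto simp: dA_def dxAct_def)
  have yA: "y$j = 0" if "j \<in> A" for j using that part(1) y by (auto simp: ls_system_def)
  have eA: "\<bar>dA$j - p$j\<bar> \<le> kA*\<mu>^2" if "j \<in> A" for j
    unfolding dA_def kA_def using dxA_err[OF that] .
  define wv where "wv = (\<chi> j. if j \<in> I then y$j - p$j else 0)"
  have wvA: "\<forall>j\<in>A. wv$j = 0" using part(1) by (auto simp: wv_def)
  define r where "r i = - (\<Sum>j\<in>A. H$i$j * (dA$j - p$j))" for i
  have req: "(\<Sum>j\<in>I. (H$i$j + (if i = j then l$i/x$i else 0)) * wv$j) = r i" if i: "i \<in> I" for i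
  proof -
    have "(\<Sum>j\<in>I. (H$i$j + (if i = j then l$i/x$i else 0)) * wv$j)
       = (\<Sum>j\<in>I. (H$i$j + (if i = j then l$i/x$i else 0)) * y$j)
         - (\<Sum>j\<in>I. (H$i$j + (if i = j then l$i/x$i else 0)) * p$j)"
      unfolding sum_subtractf[symmetric] by (rule sum.cong) (auto simp: wv_def algebra_simps)
    also have "\<dots> = - ((\<Sum>j\<in>A. H$i$j * dA$j) - (\<Sum>j\<in>A. H$i$j * p$j))"
    proof -
      have e1: "(\<Sum>j\<in>I. (H$i$j + (if i = j then l$i/x$i else 0)) * y$j)
         = - (g$i + (\<Sum>j\<in>A. H$i$j * dA$j)) + mup / x$i"
        using y i unfolding ls_system_def dA_def by blast
      show ?thesis using e1 newton_red[OF i] by linarith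
    qed
    also have "\<dots> = r i" unfolding r_def sum_subtractf[symmetric] by (simp add: right_diff_distrib)
    finally show ?thesis .
  qed
  have am: "0 \<le> kA*\<mu>^2" using kA0 by simp
  have rb: "\<bar>r i\<bar> \<le> N*(h*(kA*\<mu>^2))" for i
    unfolding r_def abs_minus_cancel N_def
  proof (rule sum_abs_bound_n)
    show "0 \<le> h*(kA*\<mu>^2)" using h0 am by simp
    fix j assume "j \<in> A" then show "\<bar>H$i$j * (dA$j - p$j)\<bar> \<le> h*(kA*\<mu>^2)"
      unfolding abs_mult using Hb[of i j] eA h0 by (intro mult_mono) auto
  qed
  have "c*(norm wv)^2 \<le> (\<Sum>i\<in>I. wv$i * r i)"
    using quad_ge[OF wvA] req by simp
  also have "\<dots> \<le> N * (norm wv * (N*(h*(kA*\<mu>^2))))"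
    unfolding N_def
  proof (rule order_trans[OF abs_ge_self sum_abs_bound_n])
    show "0 \<le> norm wv * (real CARD('n)*(h*(kA*\<mu>^2)))" using h0 am by simp
    fix i show "\<bar>wv$i * r i\<bar> \<le> norm wv * (real CARD('n)*(h*(kA*\<mu>^2)))"
      unfolding abs_mult using component_le_norm_cart[of wv i] rb[of i] unfolding N_def
      by (intro mult_mono) auto
  qed
  finally have cw: "c*(norm wv)^2 \<le> norm wv * (N^2*h*kA*\<mu>^2)" by (simp add: algebra_simps power2_eq_square)
  have wvb: "norm wv \<le> N^2*h*kA/c*\<mu>^2"
  proof (cases "norm wv = 0")
    case True then show ?thesis using h0 kA0 c by simp
  next
    case False
    then have "c * norm wv \<le> N^2*h*kA*\<mu>^2" using cw by (simp add: power2_eq_square mult.assoc)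
    then show ?thesis using c by (simp add: field_simps)
  qed
  have N2: "0 \<le> N^2*h*kA/c*\<mu>^2" using h0 kA0 c by simp
  show ?thesis
  proof (cases "k \<in> A")
    case True
    have "(dxAct A sS g H mup x l + y)$k - p$k = dA$k - p$k" using yA[OF True] by (simp add: dA_def)
    then show ?thesis using eA[OF True] N2 unfolding kx_def N_def by (simp add: algebra_simps)
  next
    case False
    then have kI: "k \<in> I" using part(2) by auto
    have "(dxAct A sS g H mup x l + y)$k - p$k = wv$k" using dAI[OF kI] kI by (simp add: dA_def wv_def)
    then have "\<bar>(dxAct A sS g H mup x l + y)$k - p$k\<bar> \<le> N^2*h*kA/c*\<mu>^2"
      using component_le_norm_cart[of wv k] wvb by simp
    then show ?thesis using am unfolding kx_def N_def by (simp add: algebra_simps)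
  qed
qed

definition kl where "kl = a*kx/cI + a^2/cI + real CARD('n)*h*kx + a*lb*kx"

lemma lb0: "0 \<le> lb" using lpos[of undefined] lub[of undefined] by linarith

lemma dl_err:
  assumes y: "ls_system I A H g mup x l (dxAct A sS g H mup x l) y"
  shows "\<bar>dlam I A sL H g mup x l (dxAct A sS g H mup x l + y) $ k - q$k\<bar> \<le> kl*\<mu>^2"
proof -
  define N where "N = real CARD('n)"
  define dx where "dx = dxAct A sS g H mup x l + y"
  have ex: "\<bar>dx$j - p$j\<bar> \<le> kx*\<mu>^2" for j unfolding dx_def by (rule dx_err[OF y])
  have xk: "x$k > 0" using xpos by simp
  have qk: "q$k = (mup - l$k*x$k - l$k*p$k)/x$k" using eq2[of k] xk by (simp add: field_simps)
  have m2: "0 \<le> kx*\<mu>^2" using kx0 by simp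
  have t1: "0 \<le> a*kx/cI*\<mu>^2" using a kx0 cI by simp
  have t2: "0 \<le> a^2/cI*\<mu>^2" using cI by simp
  have t3: "0 \<le> N*h*kx*\<mu>^2" using h0 kx0 by (simp add: N_def)
  have t4: "0 \<le> a*lb*kx*\<mu>^2" using a lb0 kx0 by simp
  have klx: "kl*\<mu>^2 = a*kx/cI*\<mu>^2 + a^2/cI*\<mu>^2 + N*h*kx*\<mu>^2 + a*lb*kx*\<mu>^2"
    unfolding kl_def N_def by (simp add: algebra_simps)
  have dlbq: "\<bar>dlb I A H g l dx k - q$k\<bar> \<le> N*h*kx*\<mu>^2" if kA: "k \<in> A"
  proof -
    have "dlb I A H g l dx k = g$k - l$k + (H *v dx)$k"
      unfolding dlb_def matrix_vector_mult_def vec_lambda_beta sum_AI by simp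
    then have "dlb I A H g l dx k - q$k = (H *v (dx - p))$k"
      using eq1[of k] by (simp add: matrix_vector_mult_diff_distrib)
    also have "\<bar>\<dots>\<bar> \<le> N*(h*(kx*\<mu>^2))" unfolding N_def
      by (rule mv_bound[OF Hb _ m2]) (simp add: ex)
    finally show ?thesis by (simp add: algebra_simps)
  qed
  show ?thesis
  proof (cases "k \<in> I")
    case kI: True
    have lx: "l$k/x$k \<le> a*\<mu>/cI" using lI[OF kI] xI[OF kI] lpos[of k] cI
      by (intro frac_le) auto
    have lx0: "0 \<le> l$k/x$k" using lpos[of k] xk by simp
    show ?thesis
    proof (cases "sL k")
      case True
      have "dlam I A sL H g mup x l dx $ k - q$k = - (l$k/x$k)*(dx$k - p$k)"
        using kI True xk unfolding dlam_def dlsI_def qk by (simp add: field_simps)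
      then have "\<bar>dlam I A sL H g mup x l dx $ k - q$k\<bar> = (l$k/x$k)*\<bar>dx$k - p$k\<bar>"
        using lx0 xk lpos[of k] by (simp add: abs_mult)
      also have "\<dots> \<le> (a*\<mu>/cI)*(kx*\<mu>^2)" using lx lx0 ex[of k] m2 by (intro mult_mono) auto
      also have "\<dots> \<le> a*kx/cI*\<mu>^2"
      proof -
        have "(a*\<mu>/cI)*(kx*\<mu>^2) = (a*kx/cI*\<mu>^2)*\<mu>" by (simp add: field_simps)
        also have "\<dots> \<le> a*kx/cI*\<mu>^2" using mult_left_le[OF mu(2) t1] .
        finally show ?thesis .
      qed
      finally show ?thesis unfolding dx_def klx using t2 t3 t4 by linarith
    next
      case False
      have "dlam I A sL H g mup x l dx $ k - q$k = (l$k/x$k)*p$k"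
        using kI False xk unfolding dlam_def dlC_def qk by (simp add: field_simps)
      then have "\<bar>dlam I A sL H g mup x l dx $ k - q$k\<bar> = (l$k/x$k)*\<bar>p$k\<bar>"
        using lx0 xk lpos[of k] by (simp add: abs_mult)
      also have "\<dots> \<le> (a*\<mu>/cI)*(a*\<mu>)" using lx lx0 pb[of k] a mu by (intro mult_mono) auto
      also have "\<dots> = a^2/cI*\<mu>^2" by (simp add: field_simps power2_eq_square)
      finally show ?thesis unfolding dx_def klx using t1 t3 t4 by linarith
    qed
  next
    case False
    then have kA: "k \<in> A" using part(2) by auto
    show ?thesis
    proof (cases "sL k")
      case True
      have val: "dlam I A sL H g mup x l dx $ k = dlsA I A H g mup x l dx k"
        using kA False True by (simp add: dlam_def)
      have d1: "1 + (x$k)^2 > 0" by (simp add: add_pos_nonneg)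
      have xb: "\<bar>x$k*l$k*(dx$k - p$k)\<bar> \<le> a*lb*(kx*\<mu>^2)"
      proof -
        have "x$k \<le> a" using xA[OF kA] mu a by (meson mult_left_le order_trans)
        then show ?thesis unfolding abs_mult using xk lpos[of k] lub[of k] ex[of k] a
          by (intro mult_mono) auto
      qed
      have "dlsA I A H g mup x l dx k - q$k
          = ((dlb I A H g l dx k - q$k) - x$k*l$k*(dx$k - p$k)) / (1 + (x$k)^2)"
      proof -
        have e: "x$k*(l$k*p$k + x$k*q$k) = x$k*(mup - l$k*x$k)" using eq2[of k] by simp
        have num: "dlb I A H g l dx k - x$k*(l$k*x$k - mup + l$k*dx$k)
          = (dlb I A H g l dx k - q$k - x$k*l$k*(dx$k - p$k)) + q$k*(1+(x$k)^2)"
          using e unfolding power2_eq_square by algebra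
        show ?thesis unfolding dlsA_def num using d1 by (simp add: add_divide_distrib)
      qed
      also have "\<bar>\<dots>\<bar> \<le> \<bar>(dlb I A H g l dx k - q$k) - x$k*l$k*(dx$k - p$k)\<bar>"
      proof -
        let ?u = "(dlb I A H g l dx k - q$k) - x$k*l$k*(dx$k - p$k)"
        have "\<bar>?u / (1 + (x$k)^2)\<bar> = \<bar>?u\<bar> / (1 + (x$k)^2)" using d1 by (simp add: abs_divide)
        also have "\<dots> \<le> \<bar>?u\<bar> / 1" by (rule divide_left_mono) (use d1 in auto)
        finally show ?thesis by simp
      qed
      also have "\<dots> \<le> \<bar>dlb I A H g l dx k - q$k\<bar> + \<bar>x$k*l$k*(dx$k - p$k)\<bar>" by (rule abs_triangle_ineq4)
      finally have fin: "\<bar>dlsA I A H g mup x l dx k - q$k\<bar> \<le> \<bar>dlb I A H g l dx k - q$k\<bar> + a*lb*(kx*\<mu>^2)"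
        using xb by linarith
      have "a*lb*(kx*\<mu>^2) = a*lb*kx*\<mu>^2" by simp
      then have "\<bar>dlam I A sL H g mup x l dx $ k - q$k\<bar> \<le> kl*\<mu>^2"
        using fin dlbq[OF kA] t1 t2 unfolding val klx by linarith
      then show ?thesis unfolding dx_def .
    next
      case False': False
      have val: "dlam I A sL H g mup x l dx $ k = dlb I A H g l dx k"
        using kA False False' by (simp add: dlam_def)
      show ?thesis using dlbq[OF kA] unfolding val dx_def[symmetric] klx using t1 t2 t4 by linarith
    qed
  qed
qed

lemma core_main:
  shows "(\<forall>i\<in>A. x$i*H$i$i + l$i \<noteq> 0) \<and>
   (\<forall>sS sL. let dxA = dxAct A sS g H mup x l in
     (\<exists>!y. ls_system I A H g mup x l dxA y) \<and>
     (\<forall>y. ls_system I A H g mup x l dxA y \<longrightarrow>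
        (let dx = dxA + y; dl = dlam I A sL H g mup x l dx in
          norm ((dx, dl) - (p,q)) \<le> real CARD('n)*(kx+kl) * \<mu>^2)))"
proof (intro conjI allI ballI)
  fix i assume "i \<in> A" then show "x$i*H$i$i + l$i \<noteq> 0" using diag[of i] cA by fastforce
next
  fix sS sL
  show "let dxA = dxAct A sS g H mup x l in
     (\<exists>!y. ls_system I A H g mup x l dxA y) \<and>
     (\<forall>y. ls_system I A H g mup x l dxA y \<longrightarrow>
        (let dx = dxA + y; dl = dlam I A sL H g mup x l dx in
          norm ((dx, dl) - (p,q)) \<le> real CARD('n)*(kx+kl) * \<mu>^2))"
    unfolding Let_def
  proof (intro conjI allI impI)
    show "\<exists>!y. ls_system I A H g mup x l (dxAct A sS g H mup x l) y" by (rule ls_exists_unique)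
  next
    fix y assume y: "ls_system I A H g mup x l (dxAct A sS g H mup x l) y"
    define dx where "dx = dxAct A sS g H mup x l + y"
    have kl0: "0 \<le> kl" unfolding kl_def using a kx0 cI h0 lb0 by simp
    have n1: "norm (dx - p) \<le> real CARD('n) * (kx*\<mu>^2)"
      by (rule l1_bound) (use dx_err[OF y] kx0 in \<open>auto simp: dx_def\<close>)
    have n2: "norm (dlam I A sL H g mup x l dx - q) \<le> real CARD('n) * (kl*\<mu>^2)"
      by (rule l1_bound) (use dl_err[OF y] kl0 in \<open>auto simp: dx_def\<close>)
    have "norm ((dx, dlam I A sL H g mup x l dx) - (p,q)) \<le> norm (dx - p) + norm (dlam I A sL H g mup x l dx - q)"
      using norm_Pair_le by simp
    also have "\<dots> \<le> real CARD('n)*(kx+kl) * \<mu>^2" using n1 n2 by (simp add: algebra_simps)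
    finally show "norm ((dxAct A sS g H mup x l + y, dlam I A sL H g mup x l (dxAct A sS g H mup x l + y)) - (p,q))
        \<le> real CARD('n)*(kx+kl) * \<mu>^2" unfolding dx_def .
  qed
qed

lemma core_main':
  shows "(\<forall>i\<in>A. x$i*H$i$i + l$i \<noteq> 0) \<and>
   (\<forall>sS sL. let dxA = dxAct A sS g H mup x l in
     (\<exists>!y. ls_system I A H g mup x l dxA y) \<and>
     (\<forall>y. ls_system I A H g mup x l dxA y \<longrightarrow>
        (let dx = dxA + y; dl = dlam I A sL H g mup x l dx in
          norm ((dx, dl) - (p,q)) \<le> Kf CARD('n) a h cA cI c lb * \<mu>^2)))"
proof -
  have "real CARD('n)*(kx+kl) = Kf CARD('n) a h cA cI c lb"
    by (simp add: Kf_def kx_def kl_def kA_def Let_def)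
  then show ?thesis using core_main by simp
qed

end

lemma entry_le_norm: fixes M :: "real^'n^'m" shows "\<bar>M$i$j\<bar> \<le> norm M"
proof -
  have "\<bar>M$i$j\<bar> \<le> norm (M$i)" by (rule component_le_norm_cart)
  also have "\<dots> \<le> norm M" by (rule Finite_Cartesian_Product.norm_nth_le)
  finally show ?thesis .
qed

lemma R1_bound:
  fixes grad :: "real^'n \<Rightarrow> real^'n" and hess :: "real^'n \<Rightarrow> real^'n^'n"
  assumes f_hess: "\<And>x. (grad has_derivative (\<lambda>h. hess x *v h)) (at x)"
    and cont: "\<And>u. norm (u - xs) < r \<Longrightarrow> norm (hess u - hess xs) < \<epsilon>"
    and x: "norm (x - xs) < r" and y: "norm (y - xs) < r"
  shows "norm (grad x - grad y - hess y *v (x - y)) \<le> real CARD('n)*real CARD('n)*(2*\<epsilon>) * norm (x - y)"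
proof -
  define S where "S = ball xs r"
  have inS: "u \<in> S \<longleftrightarrow> norm (u - xs) < r" for u by (simp add: S_def dist_norm norm_minus_commute)
  define f where "f u = grad u - hess y *v u" for u
  have der: "(f has_derivative (\<lambda>h. hess u *v h - hess y *v h)) (at u within S)" for u
  proof -
    have "((\<lambda>u. hess y *v u) has_derivative (\<lambda>h. hess y *v h)) (at u)"
      by (rule bounded_linear_imp_has_derivative) simp
    from has_derivative_diff[OF f_hess[of u] this] show ?thesis
      unfolding f_def by (rule has_derivative_at_withinI)
  qed
  have onb: "onorm (\<lambda>h. hess u *v h - hess y *v h) \<le> real CARD('n)*real CARD('n)*(2*\<epsilon>)" if u: "u \<in> S" for u
  proof -
    have eq: "(\<lambda>h. hess u *v h - hess y *v h) = (*v) (hess u - hess y)"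
      by (rule ext) (simp add: matrix_vector_mult_diff_rdistrib)
    have "norm (hess u - hess y) \<le> norm (hess u - hess xs) + norm (hess y - hess xs)"
      by (metis norm_diff_triangle_le norm_minus_commute order_refl)
    also have "\<dots> < 2*\<epsilon>" using cont u y inS by (smt (verit))
    finally have "norm (hess u - hess y) < 2*\<epsilon>" .
    then have "\<bar>(hess u - hess y)$i$j\<bar> \<le> 2*\<epsilon>" for i j using entry_le_norm[of "hess u - hess y" i j] by linarith
    then show ?thesis unfolding eq by (rule onorm_le_matrix_component)
  qed
  have "norm (f x - f y) \<le> real CARD('n)*real CARD('n)*(2*\<epsilon>) * norm (x - y)"
    by (rule differentiable_bound[of S f "\<lambda>u h. hess u *v h - hess y *v h"])
       (use der onb x y inS in \<open>auto simp: S_def\<close>)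
  moreover have "f x - f y = grad x - grad y - hess y *v (x - y)"
    by (simp add: f_def matrix_vector_mult_diff_distrib)
  ultimately show ?thesis by simp
qed

lemma coercive_const:
  fixes H :: "real^'n^'n" and I A :: "'n set"
  assumes pd: "\<And>v. v \<noteq> 0 \<Longrightarrow> (\<forall>j\<in>A. v$j = 0) \<Longrightarrow> (\<Sum>i\<in>I. \<Sum>j\<in>I. v$i * H$i$j * v$j) > 0"
  shows "\<exists>c>0. \<forall>v. (\<forall>j\<in>A. v$j = 0) \<longrightarrow> c*(norm v)^2 \<le> (\<Sum>i\<in>I. \<Sum>j\<in>I. v$i * H$i$j * v$j)"
proof -
  define Q where "Q v = (\<Sum>i\<in>I. \<Sum>j\<in>I. v$i * H$i$j * v$j)" for v :: "real^'n"
  have Qs: "Q (t *\<^sub>R v) = t^2 * Q v" for t v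
    unfolding Q_def by (simp add: sum_distrib_left algebra_simps power2_eq_square)
  define S where "S = sphere (0::real^'n) 1 \<inter> (\<Inter>j\<in>A. {v. v$j = 0})"
  have cS: "compact S" unfolding S_def
    by (intro compact_Int_closed compact_sphere closed_INT ballI closed_Collect_eq continuous_intros)
  have contQ: "continuous_on S Q" unfolding Q_def by (intro continuous_intros)
  show ?thesis
  proof (cases "S = {}")
    case True
    have "v = 0" if "\<forall>j\<in>A. v$j = 0" for v :: "real^'n"
    proof (rule ccontr)
      assume "v \<noteq> 0"
      then have "(1/norm v) *\<^sub>R v \<in> S" using that by (simp add: S_def norm_sgn)
      then show False using True by simp
    qed
    then have "\<forall>v. (\<forall>j\<in>A. v$j = 0) \<longrightarrow> 1*(norm v)^2 \<le> (\<Sum>i\<in>I. \<Sum>j\<in>I. v$i * H$i$j * v$j)"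
    proof (intro allI impI)
      fix v :: "real^'n" assume "\<forall>j\<in>A. v$j = 0"
      then have "v = 0" using \<open>\<And>v. \<forall>j\<in>A. v$j = 0 \<Longrightarrow> v = 0\<close> by blast
      then show "1*(norm v)^2 \<le> (\<Sum>i\<in>I. \<Sum>j\<in>I. v$i * H$i$j * v$j)" by simp
    qed
    then show ?thesis by (intro exI[of _ 1]) auto
  next
    case False
    obtain v0 where v0: "v0 \<in> S" "\<And>v. v \<in> S \<Longrightarrow> Q v0 \<le> Q v"
      using continuous_attains_inf[OF cS False contQ] by blast
    have "v0 \<noteq> 0" "\<forall>j\<in>A. v0$j = 0" using v0(1) by (auto simp: S_def)
    then have c0: "Q v0 > 0" using pd unfolding Q_def by blast
    have "Q v0 * (norm v)^2 \<le> Q v" if A0: "\<forall>j\<in>A. v$j = 0" for v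
    proof (cases "v = 0")
      case True then show ?thesis by (simp add: Q_def)
    next
      case False
      define u where "u = (1/norm v) *\<^sub>R v"
      have "u \<in> S" using A0 False by (simp add: S_def u_def)
      then have "Q v0 \<le> Q u" by (rule v0(2))
      moreover have "v = norm v *\<^sub>R u" using False by (simp add: u_def)
      then have "Q v = (norm v)^2 * Q u" using Qs by metis
      ultimately show ?thesis using False by (simp add: mult.commute mult_left_mono)
    qed
    then show ?thesis using c0 unfolding Q_def by blast
  qed
qed

lemma coercive_perturb:
  fixes H H0 :: "real^'n^'n" and I A :: "'n set"
  assumes co: "\<And>v. (\<forall>j\<in>A. v$j = 0) \<Longrightarrow> c0*(norm v)^2 \<le> (\<Sum>i\<in>I. \<Sum>j\<in>I. v$i * H0$i$j * v$j)"
    and d: "\<And>i j. \<bar>H$i$j - H0$i$j\<bar> \<le> e" and e: "real CARD('n)^2 * e \<le> c0/2"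
    and A0: "\<forall>j\<in>A. v$j = 0"
  shows "c0/2*(norm v)^2 \<le> (\<Sum>i\<in>I. \<Sum>j\<in>I. v$i * H$i$j * v$j)"
proof -
  define N where "N = real CARD('n)"
  have e0: "0 \<le> e" using d[of undefined undefined] by linarith
  have nv: "0 \<le> norm v * norm v" by simp
  have inner: "\<bar>\<Sum>j\<in>I. v$i * (H$i$j - H0$i$j) * v$j\<bar> \<le> N*(norm v * e * norm v)" for i
    unfolding N_def
  proof (rule sum_abs_bound_n)
    show "0 \<le> norm v * e * norm v" using e0 by simp
    fix j show "\<bar>v$i * (H$i$j - H0$i$j) * v$j\<bar> \<le> norm v * e * norm v"
      unfolding abs_mult using component_le_norm_cart[of v i] component_le_norm_cart[of v j] d[of i j] e0
      by (intro mult_mono) auto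
  qed
  have diff: "\<bar>(\<Sum>i\<in>I. \<Sum>j\<in>I. v$i * H$i$j * v$j) - (\<Sum>i\<in>I. \<Sum>j\<in>I. v$i * H0$i$j * v$j)\<bar>
      \<le> N*(N*(norm v * e * norm v))"
  proof -
    have "(\<Sum>i\<in>I. \<Sum>j\<in>I. v$i * H$i$j * v$j) - (\<Sum>i\<in>I. \<Sum>j\<in>I. v$i * H0$i$j * v$j)
        = (\<Sum>i\<in>I. \<Sum>j\<in>I. v$i * (H$i$j - H0$i$j) * v$j)"
      by (simp add: sum_subtractf[symmetric] algebra_simps)
    also have "\<bar>\<dots>\<bar> \<le> N*(N*(norm v * e * norm v))" unfolding N_def
      by (rule sum_abs_bound_n) (use inner e0 in \<open>auto simp: N_def\<close>)
    finally show ?thesis .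
  qed
  have "N*(N*(norm v * e * norm v)) = (N^2*e) * (norm v)^2" by (simp add: power2_eq_square algebra_simps)
  also have "\<dots> \<le> c0/2 * (norm v)^2" using e unfolding N_def by (intro mult_right_mono) auto
  finally show ?thesis using diff co[OF A0] by linarith
qed

lemma step1:
  fixes grad :: "real^'n \<Rightarrow> real^'n" and hess :: "real^'n \<Rightarrow> real^'n^'n"
  assumes f_hess: "\<And>x. (grad has_derivative (\<lambda>h. hess x *v h)) (at x)"
    and cont: "\<And>u. norm (u - xs) < r \<Longrightarrow> norm (hess u - hess xs) < \<epsilon>"
    and x: "norm (x - xs) < r" and xm: "norm (xm - xs) < r"
    and gm: "grad xm = lm" and cm: "\<And>i. lm$i * xm$i = \<mu>"
    and low: "\<And>v. norm v \<le> M * norm (Fprime (hess xm) xm lm v)"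
    and M0: "0 \<le> M"
    and e1: "M * (real CARD('n)*real CARD('n)*(2*\<epsilon>)) \<le> 1/4"
    and e2: "M * real CARD('n) * norm ((x,l) - (xm,lm)) \<le> 1/4"
    and F: "norm (Fmu grad \<mu> x l) \<le> C1*\<mu>"
  shows "norm ((x,l) - (xm,lm)) \<le> 2*M*C1*\<mu>"
proof -
  define N where "N = real CARD('n)"
  define B where "B = N*N*(2*\<epsilon>)"
  define dx where "dx = x - xm"
  define dl where "dl = l - lm"
  define nd where "nd = norm ((x,l) - (xm,lm))"
  have dd: "(x,l) - (xm,lm) = (dx,dl)" by (simp add: dx_def dl_def)
  define R1 where "R1 = grad x - grad xm - hess xm *v dx"
  define R2 where "R2 = (\<chi> i. dl$i * dx$i)"
  have c2: "lm$i*dx$i + xm$i*dl$i = (l$i*x$i - \<mu>) - dl$i*dx$i" for i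
    unfolding dx_def dl_def vector_minus_component cm[of i, symmetric] by (simp add: algebra_simps)
  have eqF: "Fprime (hess xm) xm lm (dx,dl) = Fmu grad \<mu> x l - (R1, R2)"
    unfolding Fprime_def Fmu_def R1_def R2_def using gm c2
    by (simp add: vec_eq_iff dl_def algebra_simps)
  have nR1: "norm R1 \<le> B * nd"
  proof -
    have "norm R1 \<le> B * norm dx" unfolding R1_def B_def N_def dx_def by (rule R1_bound[OF f_hess cont x xm])
    also have "\<dots> \<le> B * nd"
    proof (rule mult_left_mono)
      show "norm dx \<le> nd" unfolding nd_def dd by (rule norm_fst_le)
      have "0 \<le> M*B" using e1 M0 unfolding B_def N_def
        by (metis cont x norm_ge_zero order.strict_trans1 mult_nonneg_nonneg of_nat_0_le_iff less_imp_le mult_2 add_nonneg_nonneg)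
      then show "0 \<le> B" unfolding B_def N_def using cont[OF x] by (smt (verit) mult_nonneg_nonneg norm_ge_zero of_nat_0_le_iff)
    qed
    finally show ?thesis .
  qed
  have nR2: "norm R2 \<le> N * (nd * nd)"
    unfolding N_def
  proof (rule l1_bound)
    show "0 \<le> nd * nd" by simp
    fix k
    have a1: "\<bar>dl$k\<bar> \<le> nd" using component_le_norm_cart[of dl k] norm_snd_le[of dl dx] unfolding nd_def dd by linarith
    have a2: "\<bar>dx$k\<bar> \<le> nd" using component_le_norm_cart[of dx k] norm_fst_le[of dx dl] unfolding nd_def dd by linarith
    show "\<bar>R2$k\<bar> \<le> nd * nd" unfolding R2_def using a1 a2 by (simp add: abs_mult mult_mono)
  qed
  have "nd \<le> M * norm (Fprime (hess xm) xm lm (dx,dl))" using low[of "(dx,dl)"] unfolding nd_def dd .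
  also have "norm (Fprime (hess xm) xm lm (dx,dl)) \<le> C1*\<mu> + (B*nd + N*(nd*nd))"
  proof -
    have "norm (Fprime (hess xm) xm lm (dx,dl)) \<le> norm (Fmu grad \<mu> x l) + norm (R1, R2)"
      unfolding eqF by (rule norm_triangle_ineq4)
    also have "norm (R1,R2) \<le> norm R1 + norm R2" by (rule norm_Pair_le)
    finally show ?thesis using F nR1 nR2 by linarith
  qed
  then have "M * norm (Fprime (hess xm) xm lm (dx,dl)) \<le> M * (C1*\<mu> + (B*nd + N*(nd*nd)))"
    using M0 by (rule mult_left_mono)
  also have "\<dots> = M*C1*\<mu> + (M*B)*nd + (M*N*nd)*nd" by (simp add: algebra_simps)
  also have "(M*B)*nd \<le> (1/4)*nd" using e1 unfolding B_def N_def by (intro mult_right_mono) (auto simp: nd_def)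
  also have "(M*N*nd)*nd \<le> (1/4)*nd" using e2 unfolding N_def nd_def by (intro mult_right_mono) auto
  finally show ?thesis unfolding nd_def by simp
qed

theorem theorem1:
  fixes f :: "real^'n \<Rightarrow> real"
    and grad :: "real^'n \<Rightarrow> real^'n"
    and hess :: "real^'n \<Rightarrow> real^'n^'n"
    and xs ls :: "real^'n"
    and \<delta> M \<mu>hat C4 \<sigma> C1 :: real
    and xmu lmu :: "real \<Rightarrow> real^'n"
  assumes f_grad: "\<And>x. (f has_derivative (\<lambda>h. grad x \<bullet> h)) (at x)"
    and f_hess: "\<And>x. (grad has_derivative (\<lambda>h. hess x *v h)) (at x)"
    and hess_cont: "continuous_on UNIV hess"
    and hess_loc_lip: "\<And>z. \<exists>r>0. \<exists>L. \<forall>u\<in>ball z r. \<forall>v\<in>ball z r.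
                              norm (hess u - hess v) \<le> L * norm (u - v)"
    and kkt_grad: "grad xs = ls"
    and xs_nn: "\<And>i. xs$i \<ge> 0"
    and ls_nn: "\<And>i. ls$i \<ge> 0"
    and compl: "\<And>i. xs$i * ls$i = 0"
    and strict: "\<And>i. xs$i + ls$i > 0"
    and posdef: "\<And>v. v \<noteq> 0 \<Longrightarrow> (\<forall>j. xs$j = 0 \<longrightarrow> v$j = 0) \<Longrightarrow>
                      (\<Sum>i\<in>{i. xs$i > 0}. \<Sum>j\<in>{j. xs$j > 0}. v$i * (hess xs)$i$j * v$j) > 0"
    and \<delta>_pos: "\<delta> > 0"
    and Fp_nonsing: "\<And>x l. (x, l) \<in> ball (xs, ls) \<delta> \<Longrightarrow>
                        bij (Fprime (hess x) x l) \<and> onorm (inv (Fprime (hess x) x l)) \<le> M"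
    and \<mu>hat_pos: "\<mu>hat > 0"
    and traj_lip: "\<exists>L. L-lipschitz_on {0<..\<mu>hat} (\<lambda>\<mu>. (xmu \<mu>, lmu \<mu>))"
    and traj_pos: "\<And>\<mu> i. \<mu> \<in> {0<..\<mu>hat} \<Longrightarrow> xmu \<mu> $ i > 0 \<and> lmu \<mu> $ i > 0"
    and traj_ball: "\<And>\<mu>. \<mu> \<in> {0<..\<mu>hat} \<Longrightarrow> (xmu \<mu>, lmu \<mu>) \<in> ball (xs, ls) \<delta>"
    and traj_eq: "\<And>\<mu>. \<mu> \<in> {0<..\<mu>hat} \<Longrightarrow> Fmu grad \<mu> (xmu \<mu>) (lmu \<mu>) = 0"
    and traj_dist: "\<And>\<mu>. \<mu> \<in> {0<..\<mu>hat} \<Longrightarrow> norm ((xmu \<mu>, lmu \<mu>) - (xs, ls)) \<le> C4 * \<mu>"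
    and \<sigma>: "0 < \<sigma>" "\<sigma> < 1"
    and C1_pos: "C1 > 0"
  shows "\<exists>\<rho> > 0. \<exists>\<mu>bar. 0 < \<mu>bar \<and> \<mu>bar \<le> \<mu>hat \<and> (\<exists>C > 0.
     \<forall>\<mu> x l. 0 < \<mu> \<and> \<mu> \<le> \<mu>bar \<and> (x, l) \<in> ball (xs, ls) \<delta> \<and>
       (\<forall>i. x$i > 0) \<and> (\<forall>i. l$i > 0) \<and>
       norm ((x, l) - (xmu \<mu>, lmu \<mu>)) < \<rho> \<and> norm (Fmu grad \<mu> x l) \<le> C1 * \<mu> \<longrightarrow>
       (let A = {i. xs$i = 0}; I = {i. xs$i > 0}; H = hess x; gx = grad x; mup = \<sigma> * \<mu> in
        (\<forall>i\<in>A. x$i * H$i$i + l$i \<noteq> 0) \<and>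
        (\<forall>sS sL. let dxA = dxAct A sS gx H mup x l in
           (\<exists>!y. ls_system I A H gx mup x l dxA y) \<and>
           (\<forall>y. ls_system I A H gx mup x l dxA y \<longrightarrow>
              (let dx = dxA + y; dl = dlam I A sL H gx mup x l dx in
               \<forall>dN. Fprime H x l dN = - Fmu grad mup x l \<longrightarrow>
                    norm ((dx, dl) - dN) \<le> C * \<mu>^2)))))"
proof -
  define N where "N = real CARD('n)"
  have "0 < CARD('n)" by (rule finite_UNIV_card_ge_0) simp
  then have N1: "1 \<le> N" unfolding N_def by linarith
  define A where "A = {i::'n. xs$i = 0}"
  define I where "I = {i::'n. xs$i > 0}"
  have part: "A \<inter> I = {}" "A \<union> I = UNIV"
    using xs_nn by (auto simp: A_def I_def less_eq_real_def)
  define m0 where "m0 = Min (range (\<lambda>i. xs$i + ls$i))"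
  have m0pos: "0 < m0" unfolding m0_def using strict by simp
  have m0le: "m0 \<le> xs$i + ls$i" for i unfolding m0_def by (rule Min_le) auto
  have lsI: "ls$i = 0" if "i \<in> I" for i using compl[of i] that by (simp add: I_def)
  have lsA: "m0 \<le> ls$i" if "i \<in> A" for i using m0le[of i] that by (simp add: A_def)
  have xsI: "m0 \<le> xs$i" if "i \<in> I" for i using m0le[of i] lsI[OF that] by simp
  have xsA: "xs$i = 0" if "i \<in> A" for i using that by (simp add: A_def)
  have pd: "(\<Sum>i\<in>I. \<Sum>j\<in>I. v$i * (hess xs)$i$j * v$j) > 0" if "v \<noteq> 0" "\<forall>j\<in>A. v$j = 0" for v
    using posdef[of v] that unfolding A_def I_def by auto
  obtain c0 where c0: "c0 > 0"
    and coer0: "\<And>v. (\<forall>j\<in>A. v$j = 0) \<Longrightarrow> c0*(norm v)^2 \<le> (\<Sum>i\<in>I. \<Sum>j\<in>I. v$i * (hess xs)$i$j * v$j)"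
    using coercive_const[where H="hess xs" and A=A and I=I] pd by blast
  define M' where "M' = max M 1"
  have M'1: "1 \<le> M'" by (simp add: M'_def)
  have lowb: "norm v \<le> M' * norm (Fprime (hess x) x l v)" if "(x, l) \<in> ball (xs, ls) \<delta>" for x l v
  proof -
    have "norm v \<le> M' * norm (Fprime (hess x) x l v)"
      by (rule Fprime_lower) (use Fp_nonsing[OF that] in \<open>auto simp: M'_def\<close>)
    then show ?thesis .
  qed
  define \<epsilon> where "\<epsilon> = min (c0/(2*N^2)) (1/(8*M'*N^2))"
  have \<epsilon>pos: "0 < \<epsilon>" unfolding \<epsilon>_def using c0 N1 M'1 by simp
  have e1: "M' * (N*N*(2*\<epsilon>)) \<le> 1/4"
  proof -
    have "\<epsilon> \<le> 1/(8*M'*N^2)" unfolding \<epsilon>_def by simp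
    then have "M' * (N*N*(2*\<epsilon>)) \<le> M' * (N*N*(2*(1/(8*M'*N^2))))"
      using M'1 N1 by (intro mult_left_mono) auto
    also have "\<dots> = 1/4" using M'1 N1 by (simp add: field_simps power2_eq_square)
    finally show ?thesis .
  qed
  have e2: "N^2 * \<epsilon> \<le> c0/2"
  proof -
    have "\<epsilon> \<le> c0/(2*N^2)" unfolding \<epsilon>_def by simp
    then show ?thesis using N1 by (simp add: field_simps)
  qed
  have "isCont hess xs" using hess_cont continuous_on_eq_continuous_at[OF open_UNIV] by blast
  then have "\<exists>s>0. \<forall>u. u \<noteq> xs \<and> norm (u - xs) < s \<longrightarrow> norm (hess u - hess xs) < \<epsilon>"
    unfolding isCont_def LIM_eq using \<epsilon>pos by blast
  then obtain r1 where r1: "r1 > 0" and r1h: "\<forall>u. u \<noteq> xs \<and> norm (u - xs) < r1 \<longrightarrow> norm (hess u - hess xs) < \<epsilon>"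
    by blast
  have r1c: "norm (hess u - hess xs) < \<epsilon>" if "norm (u - xs) < r1" for u
    using r1h that \<epsilon>pos by (cases "u = xs") auto
  define hB where "hB = norm (hess xs) + \<epsilon>"
  have hB0: "0 \<le> hB" unfolding hB_def using \<epsilon>pos by simp
  have C40: "0 \<le> C4"
  proof -
    have "0 \<le> C4 * \<mu>hat" using traj_dist[of \<mu>hat] \<mu>hat_pos by (meson greaterThanAtMost_iff norm_ge_zero order_refl order_trans)
    then show ?thesis using \<mu>hat_pos by (simp add: zero_le_mult_iff)
  qed
  define K1 where "K1 = 2*M'*C1"
  define K2 where "K2 = K1 + C4"
  have K20: "0 \<le> K2" unfolding K2_def K1_def using M'1 C1_pos C40 by simp
  define a where "a = K2 + M'*(C1 + N)"
  have a0: "0 \<le> a" unfolding a_def using K20 M'1 C1_pos N1 by simp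
  define \<rho> where "\<rho> = min (r1/2) (1/(4*M'*N))"
  have \<rho>pos: "0 < \<rho>" unfolding \<rho>_def using r1 M'1 N1 by simp
  define \<mu>bar where "\<mu>bar = min \<mu>hat (min 1 (min (r1/(2*(C4+1))) (m0/(4*(K2+1)*(hB+1)))))"
  have \<mu>bar_pos: "0 < \<mu>bar" unfolding \<mu>bar_def using \<mu>hat_pos r1 C40 m0pos K20 hB0 by simp
  have \<mu>bar_le: "\<mu>bar \<le> \<mu>hat" unfolding \<mu>bar_def by simp
  define lb where "lb = norm ls + m0"
  define C where "C = Kf CARD('n) a hB (m0/2) (m0/2) (c0/2) lb + 1"
  have Kf0: "0 \<le> Kf CARD('n) a hB (m0/2) (m0/2) (c0/2) lb"
    unfolding Kf_def Let_def lb_def using a0 hB0 m0pos c0 by simp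
  have Cpos: "0 < C" unfolding C_def using Kf0 by simp
  show ?thesis
    apply (rule exI[of _ \<rho>], rule conjI, fact)
    apply (rule exI[of _ \<mu>bar], intro conjI, fact, fact)
    apply (rule exI[of _ C], rule conjI, fact)
    apply (intro allI impI)
    apply (elim conjE)
    subgoal premises H for \<mu> x l
    proof -
      have \<mu>0: "0 < \<mu>" and \<mu>b: "\<mu> \<le> \<mu>bar" using H by auto
      have ball: "(x, l) \<in> ball (xs, ls) \<delta>" using H by auto
      have xp: "\<forall>i. x$i > 0" and lp: "\<forall>i. l$i > 0" using H by auto
      have near: "norm ((x, l) - (xmu \<mu>, lmu \<mu>)) < \<rho>" using H by auto
      have F: "norm (Fmu grad \<mu> x l) \<le> C1 * \<mu>" using H by auto
      have \<mu>h: "\<mu> \<in> {0<..\<mu>hat}" using \<mu>0 \<mu>b \<mu>bar_le by auto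
      have \<mu>1: "\<mu> \<le> 1" using \<mu>b unfolding \<mu>bar_def by simp
      have \<mu>r: "\<mu> \<le> r1/(2*(C4+1))" using \<mu>b unfolding \<mu>bar_def by simp
      have \<mu>m: "\<mu> \<le> m0/(4*(K2+1)*(hB+1))" using \<mu>b unfolding \<mu>bar_def by simp
      have C4r: "C4*\<mu> < r1/2"
      proof -
        have "(C4+1)*\<mu> \<le> r1/2" using \<mu>r C40 by (simp add: field_simps)
        then show ?thesis using \<mu>0 by (simp add: algebra_simps)
      qed
      have kk: "(K2+1)*(hB+1)*\<mu> \<le> m0/4"
      proof -
        have D: "0 < 4*(K2+1)*(hB+1)" using K20 hB0 by simp
        have "\<mu>*(4*(K2+1)*(hB+1)) \<le> m0" using \<mu>m pos_le_divide_eq[OF D] by blast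
        then show ?thesis by (simp add: algebra_simps)
      qed
      have kk1: "K2*\<mu> \<le> m0/4"
      proof -
        have "K2 \<le> (K2+1)*(hB+1)" using K20 hB0 by (simp add: algebra_simps add_increasing mult_nonneg_nonneg)
        then have "K2*\<mu> \<le> (K2+1)*(hB+1)*\<mu>" using \<mu>0 by (intro mult_right_mono) auto
        then show ?thesis using kk by linarith
      qed
      have kk2: "K2*\<mu>*hB \<le> m0/4"
      proof -
        have "K2*hB \<le> (K2+1)*(hB+1)" using K20 hB0 by (simp add: algebra_simps add_increasing mult_nonneg_nonneg)
        then have "K2*hB*\<mu> \<le> (K2+1)*(hB+1)*\<mu>" using \<mu>0 by (intro mult_right_mono) auto
        then show ?thesis using kk by (simp add: algebra_simps)
      qed
      define xm where "xm = xmu \<mu>"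
      define lm where "lm = lmu \<mu>"
      have Fm0: "Fmu grad \<mu> xm lm = 0" unfolding xm_def lm_def by (rule traj_eq[OF \<mu>h])
      have gm: "grad xm = lm" using Fm0 by (simp add: Fmu_def zero_prod_def)
      have cm: "lm$i * xm$i = \<mu>" for i
      proof -
        have "snd (Fmu grad \<mu> xm lm) $ i = 0" using Fm0 by simp
        then show ?thesis by (simp add: Fmu_def)
      qed
      have dm: "norm ((xm, lm) - (xs, ls)) \<le> C4*\<mu>" unfolding xm_def lm_def by (rule traj_dist[OF \<mu>h])
      have ballm: "(xm, lm) \<in> ball (xs, ls) \<delta>" unfolding xm_def lm_def by (rule traj_ball[OF \<mu>h])
      have nxm: "norm (xm - xs) < r1"
        using norm_fst_le[of "xm - xs" "lm - ls"] dm C4r r1 by simp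
      have ndz: "norm ((x,l) - (xs,ls)) \<le> norm ((x, l) - (xm, lm)) + norm ((xm, lm) - (xs, ls))"
        using norm_triangle_ineq[of "(x,l) - (xm,lm)" "(xm,lm) - (xs,ls)"] by simp
      have \<rho>r: "\<rho> \<le> r1/2" unfolding \<rho>_def by simp
      have nx: "norm (x - xs) < r1"
      proof -
        have "norm (x - xs) \<le> norm ((x,l) - (xs,ls))" using norm_fst_le[of "x - xs" "l - ls"] by simp
        then show ?thesis using ndz near dm C4r \<rho>r unfolding xm_def lm_def by linarith
      qed
      have e2': "M' * N * norm ((x,l) - (xm,lm)) \<le> 1/4"
      proof -
        have "norm ((x,l) - (xm,lm)) \<le> 1/(4*M'*N)" using near unfolding xm_def lm_def \<rho>_def by simp
        then have "M' * N * norm ((x,l) - (xm,lm)) \<le> M' * N * (1/(4*M'*N))"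
          using M'1 N1 by (intro mult_left_mono) auto
        also have "\<dots> = 1/4" using M'1 N1 by simp
        finally show ?thesis .
      qed
      have st1: "norm ((x,l) - (xm,lm)) \<le> 2*M'*C1*\<mu>"
        by (rule step1[OF f_hess r1c nx nxm gm cm lowb[OF ballm]])
           (use M'1 e1 e2' F in \<open>auto simp: N_def\<close>)
      have nz: "norm ((x,l) - (xs,ls)) \<le> K2*\<mu>"
        using ndz st1 dm unfolding K2_def K1_def by (simp add: algebra_simps)
      have cx: "\<bar>x$i - xs$i\<bar> \<le> K2*\<mu>" for i
        using component_le_norm_cart[of "x - xs" i] norm_fst_le[of "x - xs" "l - ls"] nz by simp
      have cl: "\<bar>l$i - ls$i\<bar> \<le> K2*\<mu>" for i
        using component_le_norm_cart[of "l - ls" i] norm_snd_le[of "l - ls" "x - xs"] nz by simp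
      define H where "H = hess x"
      define mup where "mup = \<sigma> * \<mu>"
      have hx: "norm (hess x - hess xs) < \<epsilon>" by (rule r1c[OF nx])
      have Hb: "\<bar>H$i$j\<bar> \<le> hB" for i j
      proof -
        have "norm (hess x) \<le> norm (hess xs) + norm (hess x - hess xs)"
          using norm_triangle_ineq[of "hess xs" "hess x - hess xs"] by simp
        then show ?thesis using entry_le_norm[of H i j] hx unfolding H_def hB_def by linarith
      qed
      define rhs where "rhs = - Fmu grad mup x l"
      have bijx: "bij (Fprime H x l)" using Fp_nonsing[OF ball] by (simp add: H_def)
      define dN0 where "dN0 = inv (Fprime H x l) rhs"
      have dN0eq: "Fprime H x l dN0 = rhs" unfolding dN0_def using bijx by (simp add: bij_is_surj surj_f_inv_f)
      obtain p q where pq: "dN0 = (p, q)" by (cases dN0)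
      have nrhs: "norm rhs \<le> (C1 + N)*\<mu>"
      proof -
        have "Fmu grad mup x l = Fmu grad \<mu> x l + ((0::real^'n), (\<chi> i::'n. \<mu> - mup))"
          by (simp add: Fmu_def vec_eq_iff)
        then have "norm rhs = norm (Fmu grad \<mu> x l + ((0::real^'n), (\<chi> i::'n. \<mu> - mup)))"
          unfolding rhs_def by (simp only: norm_minus_cancel)
        also have "\<dots> \<le> norm (Fmu grad \<mu> x l) + norm ((0::real^'n), (\<chi> i::'n. \<mu> - mup))"
          by (rule norm_triangle_ineq)
        also have "norm ((0::real^'n), (\<chi> i::'n. \<mu> - mup)) \<le> N * \<mu>"
        proof -
          have "norm ((0::real^'n), (\<chi> i::'n. \<mu> - mup)) = norm (\<chi> i::'n. \<mu> - mup)" by (simp add: norm_Pair)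
          also have "\<dots> \<le> N * \<mu>" unfolding N_def
            by (rule l1_bound) (use \<sigma> \<mu>0 in \<open>auto simp: mup_def abs_le_iff algebra_simps\<close>)
          finally show ?thesis .
        qed
        finally show ?thesis using F by (simp add: algebra_simps)
      qed
      have ndN: "norm dN0 \<le> M'*(C1 + N)*\<mu>"
      proof -
        have "norm dN0 \<le> M' * norm (Fprime (hess x) x l dN0)" by (rule lowb[OF ball])
        also have "\<dots> = M' * norm rhs" using dN0eq by (simp add: H_def)
        also have "\<dots> \<le> M' * ((C1 + N)*\<mu>)" using nrhs M'1 by (intro mult_left_mono) auto
        finally show ?thesis by simp
      qed
      have pb: "\<bar>p$i\<bar> \<le> a*\<mu>" for i
      proof -
        have "\<bar>p$i\<bar> \<le> norm dN0" using component_le_norm_cart[of p i] norm_fst_le[of p q] pq by simp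
        also have "\<dots> \<le> a*\<mu>" using ndN mult_nonneg_nonneg[OF K20 less_imp_le[OF \<mu>0]] unfolding a_def by (simp add: algebra_simps)
        finally show ?thesis .
      qed
      have qb: "\<bar>q$i\<bar> \<le> a*\<mu>" for i
      proof -
        have "\<bar>q$i\<bar> \<le> norm dN0" using component_le_norm_cart[of q i] norm_snd_le[of q p] pq by simp
        also have "\<dots> \<le> a*\<mu>" using ndN mult_nonneg_nonneg[OF K20 less_imp_le[OF \<mu>0]] unfolding a_def by (simp add: algebra_simps)
        finally show ?thesis .
      qed
      have K2a: "K2*\<mu> \<le> a*\<mu>" using \<mu>0 M'1 C1_pos N1 unfolding a_def by (intro mult_right_mono) auto
      have eqs: "Fprime H x l (p,q) = - Fmu grad mup x l" using dN0eq pq rhs_def by simp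
      have eq1: "(H *v p)$i - q$i = l$i - grad x$i" for i
      proof -
        have "fst (Fprime H x l (p,q)) $ i = fst (- Fmu grad mup x l) $ i" using eqs by simp
        then show ?thesis by (simp add: Fprime_def Fmu_def)
      qed
      have eq2: "l$i*p$i + x$i*q$i = mup - l$i*x$i" for i
      proof -
        have "snd (Fprime H x l (p,q)) $ i = snd (- Fmu grad mup x l) $ i" using eqs by simp
        then show ?thesis by (simp add: Fprime_def Fmu_def)
      qed
      have core_inst: "core H x l (grad x) p q A I mup \<mu> a hB (m0/2) (m0/2) (c0/2) lb"
      proof
        show "A \<inter> I = {}" "A \<union> I = UNIV" by (rule part)+
        show "\<And>i. x$i > 0" using xp by simp
        show "\<And>i. l$i > 0" using lp by simp
        show "0 < \<mu>" "\<mu> \<le> 1" by (rule \<mu>0, rule \<mu>1)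
        show "\<And>i. (H *v p)$i - q$i = l$i - grad x$i" by (rule eq1)
        show "\<And>i. l$i*p$i + x$i*q$i = mup - l$i*x$i" by (rule eq2)
        show "x$i \<le> a*\<mu>" if "i\<in>A" for i using cx[of i] xsA[OF that] K2a by (simp add: abs_le_iff)
        show "m0/2 \<le> l$i" if "i\<in>A" for i using cl[of i] lsA[OF that] kk1 by (simp add: abs_le_iff)
        show "m0/2 > 0" using m0pos by simp
        show "m0/2 \<le> x$i" if "i\<in>I" for i using cx[of i] xsI[OF that] kk1 by (simp add: abs_le_iff)
        show "l$i \<le> a*\<mu>" if "i\<in>I" for i using cl[of i] lsI[OF that] K2a by (simp add: abs_le_iff)
        show "\<And>i. l$i \<le> lb"
        proof -
          fix i have "ls$i \<le> norm ls" using component_le_norm_cart[of ls i] by linarith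
          then show "l$i \<le> lb" using cl[of i] kk1 unfolding lb_def by linarith
        qed
        show "\<And>i j. \<bar>H$i$j\<bar> \<le> hB" by (rule Hb)
        show "\<And>i. \<bar>p$i\<bar> \<le> a*\<mu>" by (rule pb)
        show "\<And>i. \<bar>q$i\<bar> \<le> a*\<mu>" by (rule qb)
        show "\<And>i. i\<in>A \<Longrightarrow> m0/2/2 \<le> x$i*H$i$i + l$i"
        proof -
          fix i assume iA: "i \<in> A"
          have x0: "0 \<le> x$i" using xp by (simp add: less_imp_le)
          have "x$i \<le> K2*\<mu>" using cx[of i] xsA[OF iA] by simp
          then have "x$i * \<bar>H$i$i\<bar> \<le> K2*\<mu>*hB" using Hb[of i i] x0 by (intro mult_mono) auto
          moreover have "- (x$i * \<bar>H$i$i\<bar>) \<le> x$i*H$i$i" using x0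
            by (metis abs_ge_minus_self abs_mult abs_of_nonneg minus_le_iff)
          ultimately show "m0/2/2 \<le> x$i*H$i$i + l$i" using cl[of i] lsA[OF iA] kk1 kk2 by linarith
        qed
        show "\<And>v. (\<forall>j\<in>A. v$j = 0) \<Longrightarrow> c0/2*(norm v)^2 \<le> (\<Sum>i\<in>I. \<Sum>j\<in>I. v$i * H$i$j * v$j)"
        proof -
          fix v :: "real^'n" assume A0: "\<forall>j\<in>A. v$j = 0"
          show "c0/2*(norm v)^2 \<le> (\<Sum>i\<in>I. \<Sum>j\<in>I. v$i * H$i$j * v$j)"
          proof (rule coercive_perturb[where H=H and e=\<epsilon> and A=A and I=I and H0="hess xs", OF coer0])
            fix i j show "\<bar>H$i$j - hess xs$i$j\<bar> \<le> \<epsilon>"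
              using entry_le_norm[of "hess x - hess xs" i j] hx unfolding H_def by simp
          next
            show "real CARD('n)^2 * \<epsilon> \<le> c0/2" using e2 unfolding N_def .
          qed (use A0 in auto)
        qed
        show "c0/2 > 0" using c0 by simp
        show "a \<ge> 0" by (rule a0)
      qed
      note res = core.core_main'[OF core_inst, unfolded Let_def]
      have uniq: "dN = (p,q)" if "Fprime H x l dN = - Fmu grad mup x l" for dN
        using dN0eq pq bijx that unfolding rhs_def by (metis bij_is_inj injD)
      have KC: "Kf CARD('n) a hB (m0/2) (m0/2) (c0/2) lb * \<mu>^2 \<le> C*\<mu>^2"
        unfolding C_def by (intro mult_right_mono) auto
      show ?thesis unfolding Let_def A_def[symmetric] I_def[symmetric] H_def[symmetric] mup_def[symmetric]
        apply (intro conjI allI impI)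
        subgoal using res by blast
        subgoal for sS sL using res by blast
        subgoal premises P for sS sL y dN
        proof -
          have dq: "dN = (p,q)" using uniq P(2) .
          show ?thesis unfolding dq using res P(1) KC by (meson order_trans)
        qed
        done
    qed
    done
qed

end
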